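(* Let $\mathbb{G}$ be an idemetric random network model. Then, for arbitrary fixed node labelings and port numberings, routing functions of total memory requirement $O(n\log n)$ bits suffice to achieve stretch $2+o(1)$ for almost all pairs: namely, for each $n$ there is a construction which, from $G_n$ and a node $r_n$ chosen uniformly at random from $G_n$, yields a routing function on $G_n$ with total memory requirement $O(n\log n)$ such that for every $\epsilon>0$, if $u,v$ are chosen uniformly at random from $G_n$, then with probability tending to $1$ as $n\to\infty$ the route produced from $u$ to $v$ has length at most $(2+\epsilon)\,d(u,v)$.
   Context: A random network model $\mathbb{G}$ assigns to every $n$ a probability distribution over graphs with $n$ nodes; $G_n$ is sampled from it; $d(u,v)$ is shortest-path distance. $\mathbb{G}$ is idemetric if there is a finite-valued function $f$ such that for $u_n,v_n$ chosen uniformly at random from $G_n$, $d(u_n,v_n)/f(n)\to1$ in probability. Routing framework: nodes carry labels in $\{1,\dots,n\}$ and each edge at node $u$ carries an output port number in $\{1,\dots,\deg(u)\}$ relative to $u$. A routing function is a family of local routing functions $R_u=(P_u,H_u)$; for distinct $u,v$ it produces a path $u=u_0,\dots,u_k=v$ with headers $h_0=v,\dots,h_k$ and ports $p_0=0,\dots,p_k$, where a message with header $h_i$ arriving at $u_i$ through port $p_i$ is forwarded on output port $P(u_i,p_i,h_i)=p_{i+1}$ with new header $H(u_i,p_i,h_i)=h_{i+1}$. The memory requirement of $u$ is the length of the shortest program computing $R_u$; the total memory requirement is the sum over nodes. A route has stretch $k$ if its length is at most $k$ times the distance. *)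

theory Defs
  imports "HOL-Probability.Probability" "HOL-Library.Nat_Bijection"
begin

section \<open>Graphs on the node set {1..n} (node labels = node names)\<close>

type_synonym graph = "(nat \<times> nat) set"

definition graph_on :: "nat \<Rightarrow> graph \<Rightarrow> bool" where
  "graph_on n G \<longleftrightarrow> G \<subseteq> {1..n} \<times> {1..n} \<and> (\<forall>x y. (x,y) \<in> G \<longrightarrow> (y,x) \<in> G)
     \<and> (\<forall>x. (x,x) \<notin> G)"

definition nbrs :: "graph \<Rightarrow> nat \<Rightarrow> nat set" where
  "nbrs G x = {y. (x,y) \<in> G}"

definition deg :: "graph \<Rightarrow> nat \<Rightarrow> nat" where
  "deg G x = card (nbrs G x)"

definition gdist :: "graph \<Rightarrow> nat \<Rightarrow> nat \<Rightarrow> enat" where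
  "gdist G u v = (INF k \<in> {k. (u,v) \<in> G ^^ k}. enat k)"

definition random_network_model :: "(nat \<Rightarrow> graph pmf) \<Rightarrow> bool" where
  "random_network_model M \<longleftrightarrow> (\<forall>n. \<forall>G \<in> set_pmf (M n). graph_on n G)"

definition pair_sample :: "(nat \<Rightarrow> graph pmf) \<Rightarrow> nat \<Rightarrow> (graph \<times> nat \<times> nat) pmf" where
  "pair_sample M n = do { G \<leftarrow> M n; u \<leftarrow> pmf_of_set {1..n}; v \<leftarrow> pmf_of_set {1..n};
                          return_pmf (G, u, v) }"

definition idemetric :: "(nat \<Rightarrow> graph pmf) \<Rightarrow> bool" where
  "idemetric M \<longleftrightarrow> (\<exists>f :: nat \<Rightarrow> real. \<forall>\<epsilon>>0.
     (\<lambda>n. measure_pmf.prob (pair_sample M n)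
        {(G,u,v). gdist G u v \<noteq> \<infinity> \<and> \<bar>real (the_enat (gdist G u v)) / f n - 1\<bar> \<le> \<epsilon>})
     \<longlonglongrightarrow> 1)"

definition root_pair_sample :: "(nat \<Rightarrow> graph pmf) \<Rightarrow> nat \<Rightarrow> (graph \<times> nat \<times> nat \<times> nat) pmf" where
  "root_pair_sample M n = do { G \<leftarrow> M n; r \<leftarrow> pmf_of_set {1..n}; u \<leftarrow> pmf_of_set {1..n};
                          v \<leftarrow> pmf_of_set {1..n}; return_pmf (G, r, u, v) }"

definition port_numbering :: "nat \<Rightarrow> graph \<Rightarrow> (nat \<Rightarrow> nat \<Rightarrow> nat) \<Rightarrow> bool" where
  "port_numbering n G pn \<longleftrightarrow> (\<forall>x\<in>{1..n}. bij_betw (pn x) {1..deg G x} (nbrs G x))"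

text \<open>A routing function: \<open>R x (p,h) = (P(x,p,h), H(x,p,h))\<close>; ports and headers are naturals.\<close>
type_synonym routing = "nat \<Rightarrow> nat \<times> nat \<Rightarrow> nat \<times> nat"

definition rstep :: "(nat \<Rightarrow> nat \<Rightarrow> nat) \<Rightarrow> routing \<Rightarrow> nat \<times> nat \<times> nat \<Rightarrow> nat \<times> nat \<times> nat" where
  "rstep pn R s = (case s of (x, p, h) \<Rightarrow> (case R x (p, h) of (p', h') \<Rightarrow> (pn x p', p', h')))"

definition rstate :: "(nat \<Rightarrow> nat \<Rightarrow> nat) \<Rightarrow> routing \<Rightarrow> nat \<Rightarrow> nat \<Rightarrow> nat \<Rightarrow> nat \<times> nat \<times> nat" where
  "rstate pn R u v i = (rstep pn R ^^ i) (u, 0, v)"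

definition route_arrives :: "graph \<Rightarrow> (nat \<Rightarrow> nat \<Rightarrow> nat) \<Rightarrow> routing \<Rightarrow> nat \<Rightarrow> nat \<Rightarrow> nat \<Rightarrow> bool" where
  "route_arrives G pn R u v k \<longleftrightarrow>
     fst (rstate pn R u v k) = v \<and>
     (\<forall>i<k. case rstate pn R u v i of (x, p, h) \<Rightarrow> fst (R x (p, h)) \<in> {1..deg G x})"

definition route_length_le :: "graph \<Rightarrow> (nat \<Rightarrow> nat \<Rightarrow> nat) \<Rightarrow> routing \<Rightarrow> nat \<Rightarrow> nat \<Rightarrow> real \<Rightarrow> bool" where
  "route_length_le G pn R u v c \<longleftrightarrow> (\<exists>k. real k \<le> c \<and> route_arrives G pn R u v k)"

definition routing_function :: "nat \<Rightarrow> graph \<Rightarrow> (nat \<Rightarrow> nat \<Rightarrow> nat) \<Rightarrow> routing \<Rightarrow> bool" where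
  "routing_function n G pn R \<longleftrightarrow>
     (\<forall>u\<in>{1..n}. \<forall>v\<in>{1..n}. u \<noteq> v \<and> gdist G u v \<noteq> \<infinity> \<longrightarrow> (\<exists>k. route_arrives G pn R u v k))"

text \<open>A Turing-complete language of mu-recursive functions on naturals (with Cantor pairing),
  including binary-encoded constants.\<close>
datatype prog = PZero | PSucc | PConst nat | PFst | PSnd | PPair prog prog | PComp prog prog
  | PRec prog prog | PMu prog

inductive eval :: "prog \<Rightarrow> nat \<Rightarrow> nat \<Rightarrow> bool" where
  "eval PZero x 0"
| "eval PSucc x (Suc x)"
| "eval (PConst c) x c"
| "eval PFst x (fst (prod_decode x))"
| "eval PSnd x (snd (prod_decode x))"
| "eval f x a \<Longrightarrow> eval g x b \<Longrightarrow> eval (PPair f g) x (prod_encode (a, b))"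
| "eval g x y \<Longrightarrow> eval f y z \<Longrightarrow> eval (PComp f g) x z"
| "eval g a y \<Longrightarrow> eval (PRec g h) (prod_encode (a, 0)) y"
| "eval (PRec g h) (prod_encode (a, k)) y \<Longrightarrow> eval h (prod_encode (a, prod_encode (k, y))) z
     \<Longrightarrow> eval (PRec g h) (prod_encode (a, Suc k)) z"
| "eval f (prod_encode (x, y)) 0 \<Longrightarrow> (\<forall>z<y. \<exists>w. w \<noteq> 0 \<and> eval f (prod_encode (x, z)) w)
     \<Longrightarrow> eval (PMu f) x y"

function bits :: "nat \<Rightarrow> bool list" where
  "bits n = (if n = 0 then [] else odd n # bits (n div 2))"
  by auto
termination by (relation "Wellfounded.measure id") auto

definition selfdelim :: "bool list \<Rightarrow> bool list" where
  "selfdelim xs = concat (map (\<lambda>b. [True, b]) xs) @ [False]"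

text \<open>Prefix-free binary encoding of programs.\<close>
primrec enc :: "prog \<Rightarrow> bool list" where
  "enc PZero = [False, False, False, False]"
| "enc PSucc = [False, False, False, True]"
| "enc (PConst c) = [False, False, True, False] @ selfdelim (bits c)"
| "enc PFst = [False, False, True, True]"
| "enc PSnd = [False, True, False, False]"
| "enc (PPair f g) = [False, True, False, True] @ enc f @ enc g"
| "enc (PComp f g) = [False, True, True, False] @ enc f @ enc g"
| "enc (PRec g h) = [False, True, True, True] @ enc g @ enc h"
| "enc (PMu f) = [True, False, False, False] @ enc f"

definition computes :: "prog \<Rightarrow> (nat \<times> nat \<Rightarrow> nat \<times> nat) \<Rightarrow> bool" where
  "computes q Ru \<longleftrightarrow> (\<forall>p h. eval q (prod_encode (p, h)) (prod_encode (Ru (p, h))))"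

definition local_memory :: "(nat \<times> nat \<Rightarrow> nat \<times> nat) \<Rightarrow> enat" where
  "local_memory Ru = (INF q \<in> {q. computes q Ru}. enat (length (enc q)))"

definition total_memory :: "nat \<Rightarrow> routing \<Rightarrow> enat" where
  "total_memory n R = (\<Sum>u\<in>{1..n}. local_memory (R u))"

end

theory Submission
  imports Defs
begin



definition "PID = PPair PFst PSnd"
lemma eval_id: "eval PID x x"
  unfolding PID_def using eval.intros(6)[OF eval.intros(4) eval.intros(5), of x] by simp

lemma eval_fst: "eval PFst (prod_encode (a,b)) a" using eval.intros(4)[of "prod_encode (a,b)"] by simp
lemma eval_snd: "eval PSnd (prod_encode (a,b)) b" using eval.intros(5)[of "prod_encode (a,b)"] by simp
lemma eval_comp: "eval g x y \<Longrightarrow> eval f y z \<Longrightarrow> eval (PComp f g) x z" by (rule eval.intros(7))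
lemma eval_pair: "eval f x a \<Longrightarrow> eval g x b \<Longrightarrow> eval (PPair f g) x (prod_encode (a, b))" by (rule eval.intros(6))
lemma eval_const: "eval (PConst c) x c" by (rule eval.intros(3))
lemma eval_zero: "eval PZero x 0" by (rule eval.intros(1))
lemma eval_succ: "eval PSucc x (Suc x)" by (rule eval.intros(2))

lemma eval_rec_gen:
  assumes "eval g a (F 0)" "\<And>k. eval h (prod_encode (a, prod_encode (k, F k))) (F (Suc k))"
  shows "eval (PRec g h) (prod_encode (a, k)) (F k)"
  by (induction k) (auto intro: eval.intros(8,9) assms)

lemma eval_snd2: "eval (PComp PSnd PSnd) (prod_encode (a, prod_encode (k, y))) y"
  by (rule eval_comp[OF eval_snd eval_snd])

definition "IF0 t e1 e2 = PComp (PRec e1 (PComp e2 PFst)) (PPair PID t)"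

lemma eval_if0:
  assumes "eval t x c" "eval e1 x a" "eval e2 x b"
  shows "eval (IF0 t e1 e2) x (if c = 0 then a else b)"
proof -
  have "eval (PRec e1 (PComp e2 PFst)) (prod_encode (x, k)) ((\<lambda>k. if k = 0 then a else b) k)" for k
    by (rule eval_rec_gen) (auto intro: assms eval_comp eval_fst)
  then show ?thesis unfolding IF0_def
    by (intro eval_comp[OF eval_pair[OF eval_id assms(1)]]) simp
qed

definition "ADD = PRec PID (PComp PSucc (PComp PSnd PSnd))"
lemma eval_add: "eval ADD (prod_encode (a, k)) (a + k)"
  unfolding ADD_def using eval_rec_gen[of PID a "\<lambda>k. a + k"]
  by (auto intro: eval_id eval_comp[OF eval_snd2 eval_succ])

definition "PRED = PComp (PRec PZero (PComp PFst PSnd)) (PPair PZero PID)"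
lemma eval_pred: "eval PRED x (x - 1)"
proof -
  have "eval (PRec PZero (PComp PFst PSnd)) (prod_encode (0, k)) ((\<lambda>k. k - 1) k)" for k
    by (rule eval_rec_gen) (auto intro: eval_zero eval_comp[OF eval_snd eval_fst])
  then show ?thesis unfolding PRED_def by (intro eval_comp[OF eval_pair[OF eval_zero eval_id]])
qed

definition "SUB = PRec PID (PComp PRED (PComp PSnd PSnd))"
lemma eval_sub: "eval SUB (prod_encode (a, k)) (a - k)"
  unfolding SUB_def using eval_rec_gen[of PID a "\<lambda>k. a - k"]
  by (auto intro: eval_id eval_comp[OF eval_snd2 eval_pred[of "a - _", simplified]])

definition "PEQ c = PComp ADD (PPair (PComp SUB (PPair PID (PConst c))) (PComp SUB (PPair (PConst c) PID)))"
lemma eval_peq: "eval (PEQ c) x ((x - c) + (c - x))"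
  unfolding PEQ_def
  by (intro eval_comp[OF _ eval_add] eval_pair eval_comp[OF _ eval_sub] eval_id eval_const)

fun TAB :: "(nat \<times> nat) list \<Rightarrow> prog" where
  "TAB [] = PZero"
| "TAB ((a,b)#es) = IF0 (PEQ a) (PConst b) (TAB es)"

fun tabf :: "(nat \<times> nat) list \<Rightarrow> nat \<Rightarrow> nat" where
  "tabf [] x = 0"
| "tabf ((a,b)#es) x = (if x = a then b else tabf es x)"

lemma eval_tab: "eval (TAB es) x (tabf es x)"
proof (induction es rule: TAB.induct)
  case 1 then show ?case by (simp add: eval_zero)
next
  case (2 a b es)
  from eval_if0[OF eval_peq[of a x] eval_const[of b] "2.IH"] show ?case
    by (auto split: if_splits)
qed



declare bits.simps[simp del]

definition stepf :: "(nat \<Rightarrow> nat) \<Rightarrow> nat \<Rightarrow> nat" where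
  "stepf tab y = (if tab (fst (prod_decode y)) = 0 then y else
     prod_encode (fst (prod_decode (tab (fst (prod_decode y)))),
       prod_encode (snd (prod_decode (tab (fst (prod_decode y)))), snd (prod_decode y))))"

definition "STEP es = IF0 (PComp (TAB es) PFst) PID
   (PPair (PComp PFst (PComp (TAB es) PFst)) (PPair (PComp PSnd (PComp (TAB es) PFst)) PSnd))"

lemma eval_fst': "eval PFst x (fst (prod_decode x))" by (rule eval.intros(4))
lemma eval_snd': "eval PSnd x (snd (prod_decode x))" by (rule eval.intros(5))

lemma eval_step: "eval (STEP es) y (stepf (tabf es) y)"
proof -
  have t: "eval (PComp (TAB es) PFst) y (tabf es (fst (prod_decode y)))"
    by (rule eval_comp[OF eval_fst' eval_tab])
  have a: "eval (PComp PFst (PComp (TAB es) PFst)) y (fst (prod_decode (tabf es (fst (prod_decode y)))))"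
    by (rule eval_comp[OF t eval_fst'])
  have b: "eval (PComp PSnd (PComp (TAB es) PFst)) y (snd (prod_decode (tabf es (fst (prod_decode y)))))"
    by (rule eval_comp[OF t eval_snd'])
  show ?thesis unfolding STEP_def stepf_def
    by (rule eval_if0[OF t eval_id eval_pair[OF a eval_pair[OF b eval_snd']]])
qed

definition Lf :: "(nat \<Rightarrow> nat) \<Rightarrow> nat \<Rightarrow> nat \<Rightarrow> nat" where
  "Lf tab N v = snd (prod_decode ((stepf tab ^^ N) (prod_encode (v, 0))))"

definition "LP es N = PComp PSnd (PComp (PRec (PPair PID PZero) (PComp (STEP es) (PComp PSnd PSnd)))
   (PPair PID (PConst N)))"

lemma eval_LP: "eval (LP es N) v (Lf (tabf es) N v)"
proof -
  have "eval (PRec (PPair PID PZero) (PComp (STEP es) (PComp PSnd PSnd))) (prod_encode (v, k))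
     ((\<lambda>k. (stepf (tabf es) ^^ k) (prod_encode (v, 0))) k)" for k
    by (rule eval_rec_gen) (auto intro: eval_pair eval_id eval_zero eval_comp[OF eval_snd2 eval_step])
  then have "eval (PRec (PPair PID PZero) (PComp (STEP es) (PComp PSnd PSnd))) (prod_encode (v, N))
     ((stepf (tabf es) ^^ N) (prod_encode (v, 0)))" by simp
  then show ?thesis unfolding LP_def Lf_def
    by (rule eval_comp[OF eval_comp[OF eval_pair[OF eval_id eval_const]] eval_snd'])
qed

definition rfun_nonroot :: "nat \<Rightarrow> nat \<times> nat \<Rightarrow> nat \<times> nat" where
  "rfun_nonroot c ph = (if fst ph = 0 then (c, prod_encode (0, snd ph))
     else if fst (prod_decode (snd ph)) = 0 then (c, snd ph) else prod_decode (snd ph))"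

definition rfun_root :: "(nat \<Rightarrow> nat) \<Rightarrow> nat \<times> nat \<Rightarrow> nat \<times> nat" where
  "rfun_root L ph = (if fst ph = 0 then prod_decode (L (snd ph))
     else if fst (prod_decode (snd ph)) = 0 then prod_decode (L (snd (prod_decode (snd ph))))
     else prod_decode (snd ph))"

definition "NRP c = IF0 PFst (PPair (PConst c) (PPair PZero PSnd))
   (IF0 (PComp PFst PSnd) (PPair (PConst c) PSnd) PSnd)"

definition "ROOTP es N = IF0 PFst (PComp (LP es N) PSnd)
   (IF0 (PComp PFst PSnd) (PComp (LP es N) (PComp PSnd PSnd)) PSnd)"

lemma computes_NRP: "computes (NRP c) (rfun_nonroot c)"
  unfolding computes_def
proof (intro allI)
  fix p h
  have "eval (NRP c) (prod_encode (p, h))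
    (if p = 0 then prod_encode (c, prod_encode (0, h)) else
      (if fst (prod_decode h) = 0 then prod_encode (c, h) else h))"
    unfolding NRP_def
    by (rule eval_if0[OF eval_fst eval_pair[OF eval_const eval_pair[OF eval_zero eval_snd]]
        eval_if0[OF eval_comp[OF eval_snd eval_fst'] eval_pair[OF eval_const eval_snd] eval_snd]])
  then show "eval (NRP c) (prod_encode (p, h)) (prod_encode (rfun_nonroot c (p, h)))"
    unfolding rfun_nonroot_def by auto
qed

lemma computes_ROOTP: "computes (ROOTP es N) (rfun_root (Lf (tabf es) N))"
  unfolding computes_def
proof (intro allI)
  fix p h
  have "eval (ROOTP es N) (prod_encode (p, h))
    (if p = 0 then Lf (tabf es) N h else
      (if fst (prod_decode h) = 0 then Lf (tabf es) N (snd (prod_decode h)) else h))"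
    unfolding ROOTP_def
    by (rule eval_if0[OF eval_fst eval_comp[OF eval_snd eval_LP]
        eval_if0[OF eval_comp[OF eval_snd eval_fst'] eval_comp[OF eval_comp[OF eval_snd eval_snd'] eval_LP] eval_snd]])
  then show "eval (ROOTP es N) (prod_encode (p, h)) (prod_encode (rfun_root (Lf (tabf es) N) (p, h)))"
    unfolding rfun_root_def by auto
qed

lemma len_selfdelim[simp]: "length (selfdelim xs) = 2 * length xs + 1"
  unfolding selfdelim_def by (induction xs) auto

lemma len_NRP: "length (enc (NRP c)) = 4 * length (bits c) + 118"
  by (simp add: NRP_def IF0_def PID_def)

lemma len_TAB: "length (enc (TAB es)) = 4 + (\<Sum>(a,b)\<leftarrow>es. 283 + 4 * length (bits a) + 2 * length (bits b))"
  by (induction es rule: TAB.induct)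
     (simp_all add: IF0_def PID_def PEQ_def ADD_def SUB_def PRED_def)

lemma len_ROOTP: "length (enc (ROOTP es N)) = 446 + 6 * length (enc (TAB es)) + 4 * length (bits N)"
  by (simp add: ROOTP_def LP_def STEP_def IF0_def PID_def)




definition gd :: "graph \<Rightarrow> nat \<Rightarrow> nat \<Rightarrow> nat" where
  "gd G a b = (LEAST k. (a,b) \<in> G ^^ k)"

lemma gdist_eq: "gdist G a b = (if (a,b) \<in> G\<^sup>* then enat (gd G a b) else \<infinity>)"
proof (cases "(a,b) \<in> G\<^sup>*")
  case True
  then obtain k where k: "(a,b) \<in> G ^^ k" by (auto simp: rtrancl_power)
  have "gdist G a b = enat (gd G a b)"
    unfolding gdist_def gd_def
  proof (rule antisym)
    show "(INF k\<in>{k. (a, b) \<in> G ^^ k}. enat k) \<le> enat (LEAST k. (a, b) \<in> G ^^ k)"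
      by (rule INF_lower) (auto intro: LeastI[of _ k] k)
    show "enat (LEAST k. (a, b) \<in> G ^^ k) \<le> (INF k\<in>{k. (a, b) \<in> G ^^ k}. enat k)"
      by (rule INF_greatest) (auto intro: Least_le)
  qed
  then show ?thesis using True by simp
next
  case False
  then have "{k. (a,b) \<in> G ^^ k} = {}" by (auto simp: rtrancl_power)
  then show ?thesis using False unfolding gdist_def by (simp add: top_enat_def)
qed

lemma gd_relpow: "(a,b) \<in> G\<^sup>* \<Longrightarrow> (a,b) \<in> G ^^ gd G a b"
  unfolding gd_def by (rule LeastI_ex) (auto simp: rtrancl_power)

lemma gd_le: "(a,b) \<in> G ^^ k \<Longrightarrow> gd G a b \<le> k"
  unfolding gd_def by (rule Least_le)

lemma gd_0_iff: "(a,b) \<in> G\<^sup>* \<Longrightarrow> gd G a b = 0 \<longleftrightarrow> a = b"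
proof
  assume "(a,b) \<in> G\<^sup>*" "gd G a b = 0"
  then show "a = b" using gd_relpow[where a=a and b=b and G=G] by simp
next
  assume "a = b" then show "gd G a b = 0" using gd_le[where a=a and b=b and G=G and k=0] by simp
qed

definition rt :: "graph \<Rightarrow> nat \<Rightarrow> nat \<Rightarrow> nat" where
  "rt G r x = (if (r,x) \<in> G\<^sup>* then r else (LEAST y. (y,x) \<in> G\<^sup>*))"

definition dp :: "graph \<Rightarrow> nat \<Rightarrow> nat \<Rightarrow> nat" where
  "dp G r x = gd G (rt G r x) x"

definition par :: "graph \<Rightarrow> nat \<Rightarrow> nat \<Rightarrow> nat" where
  "par G r x = (SOME y. (y,x) \<in> G \<and> (rt G r x, y) \<in> G\<^sup>* \<and> Suc (gd G (rt G r x) y) = dp G r x)"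

locale gr =
  fixes n :: nat and G :: graph and r :: nat
  assumes gon: "graph_on n G" and rin: "r \<in> {1..n}"
begin

lemma symG: "sym G" using gon unfolding graph_on_def sym_def by blast

lemma Gin: "(a,b) \<in> G \<Longrightarrow> a \<in> {1..n} \<and> b \<in> {1..n}" using gon unfolding graph_on_def by blast

lemma reach_sym: "(a,b) \<in> G\<^sup>* \<Longrightarrow> (b,a) \<in> G\<^sup>*"
  using sym_rtrancl[OF symG] unfolding sym_def by blast

lemma reach_in: "(a,b) \<in> G\<^sup>* \<Longrightarrow> b \<in> {1..n} \<Longrightarrow> a \<in> {1..n}"
  by (induction rule: converse_rtrancl_induct) (auto dest: Gin)

lemma rt_in: "x \<in> {1..n} \<Longrightarrow> rt G r x \<in> {1..n} \<and> (rt G r x, x) \<in> G\<^sup>*"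
proof -
  assume x: "x \<in> {1..n}"
  have "(rt G r x, x) \<in> G\<^sup>*"
    unfolding rt_def by (auto intro: LeastI[of "\<lambda>y. (y,x) \<in> G\<^sup>*" x])
  then show ?thesis using reach_in x by blast
qed

lemma rt_eq: "(y,x) \<in> G\<^sup>* \<Longrightarrow> rt G r y = rt G r x"
proof -
  assume yx: "(y,x) \<in> G\<^sup>*"
  have "(r,y) \<in> G\<^sup>* \<longleftrightarrow> (r,x) \<in> G\<^sup>*" using yx reach_sym[OF yx] rtrancl_trans by metis
  moreover have "(\<lambda>z. (z,y) \<in> G\<^sup>*) = (\<lambda>z. (z,x) \<in> G\<^sup>*)" using yx reach_sym[OF yx] rtrancl_trans by metis
  ultimately show ?thesis unfolding rt_def by simp
qed

lemma rt_rt: "x \<in> {1..n} \<Longrightarrow> rt G r (rt G r x) = rt G r x"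
  using rt_in rt_eq by blast

lemma dp_0: "x \<in> {1..n} \<Longrightarrow> dp G r x = 0 \<longleftrightarrow> rt G r x = x"
  unfolding dp_def using gd_0_iff rt_in by blast

lemma par_ex: "x \<in> {1..n} \<Longrightarrow> rt G r x \<noteq> x \<Longrightarrow>
  \<exists>y. (y,x) \<in> G \<and> (rt G r x, y) \<in> G\<^sup>* \<and> Suc (gd G (rt G r x) y) = dp G r x"
proof -
  assume x: "x \<in> {1..n}" and nr: "rt G r x \<noteq> x"
  let ?a = "rt G r x"
  have ax: "(?a, x) \<in> G ^^ dp G r x" unfolding dp_def using gd_relpow rt_in[OF x] by blast
  have "dp G r x \<noteq> 0" using dp_0[OF x] nr by blast
  then obtain k where k: "dp G r x = Suc k" by (cases "dp G r x") auto
  with ax obtain y where ay: "(?a, y) \<in> G ^^ k" and yx: "(y, x) \<in> G" by (auto elim: relpow_Suc_E)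
  have "gd G ?a y \<le> k" using gd_le[OF ay] .
  moreover have "\<not> gd G ?a y < k"
  proof
    assume lt: "gd G ?a y < k"
    have "(?a, y) \<in> G ^^ gd G ?a y" using gd_relpow ay relpow_imp_rtrancl by blast
    then have "(?a, x) \<in> G ^^ Suc (gd G ?a y)" using yx by auto
    then have "gd G ?a x \<le> Suc (gd G ?a y)" by (rule gd_le)
    then show False using lt k unfolding dp_def by simp
  qed
  ultimately have "gd G ?a y = k" by simp
  moreover have "(?a, y) \<in> G\<^sup>*" using ay by (rule relpow_imp_rtrancl)
  ultimately show ?thesis using yx k by auto
qed

lemma par_props: assumes x: "x \<in> {1..n}" and nr: "rt G r x \<noteq> x"
  shows "(par G r x, x) \<in> G" "(x, par G r x) \<in> G" "rt G r (par G r x) = rt G r x"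
    "Suc (dp G r (par G r x)) = dp G r x" "par G r x \<in> {1..n}"
proof -
  have P: "(par G r x, x) \<in> G \<and> (rt G r x, par G r x) \<in> G\<^sup>* \<and> Suc (gd G (rt G r x) (par G r x)) = dp G r x"
    unfolding par_def by (rule someI_ex[OF par_ex[OF x nr]])
  then show 1: "(par G r x, x) \<in> G" by blast
  then show "(x, par G r x) \<in> G" using symG unfolding sym_def by blast
  show 3: "rt G r (par G r x) = rt G r x" using 1 rt_eq by blast
  show "Suc (dp G r (par G r x)) = dp G r x" using P 3 unfolding dp_def by simp
  show "par G r x \<in> {1..n}" using 1 Gin by blast
qed

lemma dp_le: assumes x: "x \<in> {1..n}" shows "dp G r x \<le> n * n"
proof (cases "rt G r x = x")
  case True then show ?thesis using dp_0[OF x] by simp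
next
  case False
  have fin: "finite G" using gon unfolding graph_on_def by (meson finite_SigmaI finite_atLeastAtMost finite_subset)
  have cG: "card G \<le> n * n"
  proof -
    have "card G \<le> card ({1..n} \<times> {1..n})" using gon unfolding graph_on_def
      by (intro card_mono) auto
    then show ?thesis by simp
  qed
  have "(rt G r x, x) \<in> G\<^sup>+" using rt_in[OF x] False by (meson rtranclD)
  then obtain m where "m \<le> card G" "(rt G r x, x) \<in> G ^^ m"
    using trancl_finite_eq_relpow[OF fin] by auto
  then show ?thesis unfolding dp_def using gd_le cG by fastforce
qed

end



definition cport :: "(nat \<Rightarrow> nat \<Rightarrow> nat) \<Rightarrow> graph \<Rightarrow> nat \<Rightarrow> nat \<Rightarrow> nat" where
  "cport pn G x y = inv_into {1..deg G x} (pn x) y"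

definition tabval :: "(nat \<Rightarrow> nat \<Rightarrow> nat) \<Rightarrow> graph \<Rightarrow> nat \<Rightarrow> nat \<Rightarrow> nat" where
  "tabval pn G r y = (if rt G r y = y then 0 else prod_encode (par G r y, cport pn G (par G r y) y))"

definition compset :: "nat \<Rightarrow> graph \<Rightarrow> nat \<Rightarrow> nat \<Rightarrow> nat set" where
  "compset n G r \<rho> = {y \<in> {1..n}. rt G r y = \<rho>}"

definition entries :: "nat \<Rightarrow> graph \<Rightarrow> nat \<Rightarrow> (nat \<Rightarrow> nat \<Rightarrow> nat) \<Rightarrow> nat \<Rightarrow> (nat \<times> nat) list" where
  "entries n G r pn \<rho> = map (\<lambda>y. (y, tabval pn G r y)) (sorted_list_of_set (compset n G r \<rho>))"

definition myR :: "nat \<Rightarrow> graph \<Rightarrow> nat \<Rightarrow> (nat \<Rightarrow> nat \<Rightarrow> nat) \<Rightarrow> routing" where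
  "myR n G r pn x = (if rt G r x = x then rfun_root (Lf (tabf (entries n G r pn x)) (n * n))
     else rfun_nonroot (cport pn G x (par G r x)))"

definition myP :: "nat \<Rightarrow> graph \<Rightarrow> nat \<Rightarrow> (nat \<Rightarrow> nat \<Rightarrow> nat) \<Rightarrow> nat \<Rightarrow> prog" where
  "myP n G r pn x = (if rt G r x = x then ROOTP (entries n G r pn x) (n * n)
     else NRP (cport pn G x (par G r x)))"

lemma computes_myP: "computes (myP n G r pn x) (myR n G r pn x)"
  unfolding myP_def myR_def by (simp add: computes_NRP computes_ROOTP)

lemma tabf_map: "tabf (map (\<lambda>y. (y, F y)) xs) x = (if x \<in> set xs then F x else 0)"
  by (induction xs) auto

definition valid :: "graph \<Rightarrow> (nat \<Rightarrow> nat \<Rightarrow> nat) \<Rightarrow> routing \<Rightarrow> nat \<times> nat \<times> nat \<Rightarrow> bool" where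
  "valid G pn R s = (case s of (x, p, h) \<Rightarrow> fst (R x (p, h)) \<in> {1..deg G x})"

definition run :: "graph \<Rightarrow> (nat \<Rightarrow> nat \<Rightarrow> nat) \<Rightarrow> routing \<Rightarrow> nat \<times> nat \<times> nat \<Rightarrow> nat \<Rightarrow> nat \<times> nat \<times> nat \<Rightarrow> bool" where
  "run G pn R s k t = ((rstep pn R ^^ k) s = t \<and> (\<forall>i<k. valid G pn R ((rstep pn R ^^ i) s)))"

lemma run_0: "run G pn R s 0 s" unfolding run_def by simp

lemma run_trans: "run G pn R s a t \<Longrightarrow> run G pn R t b w \<Longrightarrow> run G pn R s (a + b) w"
  unfolding run_def
proof (intro conjI allI impI; elim conjE)
  assume 1: "(rstep pn R ^^ a) s = t" "\<forall>i<a. valid G pn R ((rstep pn R ^^ i) s)"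
     and 2: "(rstep pn R ^^ b) t = w" "\<forall>i<b. valid G pn R ((rstep pn R ^^ i) t)"
  show "(rstep pn R ^^ (a + b)) s = w" using 1 2 by (simp add: funpow_add add.commute[of a b])
  fix i assume "i < a + b"
  show "valid G pn R ((rstep pn R ^^ i) s)"
  proof (cases "i < a")
    case True then show ?thesis using 1 by simp
  next
    case False
    define j where "j = i - a"
    have j: "i = j + a" "j < b" using \<open>i < a + b\<close> False unfolding j_def by auto
    have "(rstep pn R ^^ i) s = (rstep pn R ^^ j) t" using 1 by (simp add: j funpow_add)
    then show ?thesis using 2 j by simp
  qed
qed

lemma run_one: "valid G pn R s \<Longrightarrow> rstep pn R s = t \<Longrightarrow> run G pn R s 1 t"
  unfolding run_def by auto

lemma run_arrives: "run G pn R (u, 0, v) k t \<Longrightarrow> fst t = v \<Longrightarrow> route_arrives G pn R u v k"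
  unfolding run_def route_arrives_def rstate_def valid_def by auto

locale gr2 = gr +
  fixes pn :: "nat \<Rightarrow> nat \<Rightarrow> nat"
  assumes pnum: "port_numbering n G pn"
begin

abbreviation "R \<equiv> myR n G r pn"

lemma cport_props: assumes x: "x \<in> {1..n}" and e: "(x,y) \<in> G"
  shows "cport pn G x y \<in> {1..deg G x}" "pn x (cport pn G x y) = y" "cport pn G x y \<noteq> 0"
proof -
  have b: "bij_betw (pn x) {1..deg G x} (nbrs G x)" using pnum x unfolding port_numbering_def by blast
  have y: "y \<in> pn x ` {1..deg G x}" using b e unfolding bij_betw_def nbrs_def by auto
  show 1: "cport pn G x y \<in> {1..deg G x}" unfolding cport_def by (rule inv_into_into[OF y])
  show "pn x (cport pn G x y) = y" unfolding cport_def by (rule f_inv_into_f[OF y])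
  show "cport pn G x y \<noteq> 0" using 1 by auto
qed

abbreviation "T \<rho> \<equiv> tabf (entries n G r pn \<rho>)"
abbreviation "dq x \<equiv> cport pn G (par G r x) x"
abbreviation "uc x \<equiv> cport pn G x (par G r x)"

lemma dq_props: assumes "x \<in> {1..n}" "rt G r x \<noteq> x"
  shows "dq x \<in> {1..deg G (par G r x)}" "pn (par G r x) (dq x) = x" "dq x \<noteq> 0"
  using cport_props[of "par G r x" x] par_props[OF assms] by auto

lemma uc_props: assumes "x \<in> {1..n}" "rt G r x \<noteq> x"
  shows "uc x \<in> {1..deg G x}" "pn x (uc x) = par G r x" "uc x \<noteq> 0"
  using cport_props[of x "par G r x"] par_props[OF assms] assms by auto

lemma T_val: assumes x: "x \<in> {1..n}"
  shows "T (rt G r x) x = tabval pn G r x"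
proof -
  have "finite (compset n G r (rt G r x))" unfolding compset_def by simp
  then show ?thesis unfolding entries_def tabf_map using x by (simp add: compset_def)
qed

lemma stepf_root: assumes x: "x \<in> {1..n}" "rt G r x = x"
  shows "stepf (T x) (prod_encode (x, acc)) = prod_encode (x, acc)"
  using T_val[OF x(1)] x unfolding stepf_def tabval_def by simp

lemma stepf_nonroot: assumes x: "x \<in> {1..n}" "rt G r x \<noteq> x"
  shows "stepf (T (rt G r x)) (prod_encode (x, acc)) = prod_encode (par G r x, prod_encode (dq x, acc))"
proof -
  have "tabval pn G r x \<noteq> 0" unfolding tabval_def using x dq_props[OF x]
    using le_prod_encode_2[of "dq x" "par G r x"] by auto
  then show ?thesis using T_val[OF x(1)] x unfolding stepf_def by (simp add: tabval_def)
qed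

end



context gr2 begin

lemma stab: "\<forall>x acc j. x \<in> {1..n} \<longrightarrow> dp G r x = k \<longrightarrow> k \<le> j \<longrightarrow>
   (\<exists>D. (stepf (T (rt G r x)) ^^ j) (prod_encode (x, acc)) = prod_encode (rt G r x, D))"
proof (induction k)
  case 0
  show ?case
  proof (intro allI impI)
    fix x acc j assume x: "x \<in> {1..n}" "dp G r x = 0"
    then have rx: "rt G r x = x" using dp_0 by blast
    have "(stepf (T x) ^^ j) (prod_encode (x, acc)) = prod_encode (x, acc)"
      by (induction j) (simp_all add: stepf_root[OF x(1) rx])
    then show "\<exists>D. (stepf (T (rt G r x)) ^^ j) (prod_encode (x, acc)) = prod_encode (rt G r x, D)"
      using rx by auto
  qed
next
  case (Suc k)
  show ?case
  proof (intro allI impI)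
    fix x acc j assume x: "x \<in> {1..n}" "dp G r x = Suc k" "Suc k \<le> j"
    then have nr: "rt G r x \<noteq> x" using dp_0 by fastforce
    note pp = par_props[OF x(1) nr]
    obtain j' where j': "j = Suc j'" using x(3) by (cases j) auto
    have "(stepf (T (rt G r x)) ^^ j) (prod_encode (x, acc)) =
      (stepf (T (rt G r x)) ^^ j') (prod_encode (par G r x, prod_encode (dq x, acc)))"
      unfolding j' funpow_Suc_right o_def stepf_nonroot[OF x(1) nr] ..
    moreover have "\<exists>D. (stepf (T (rt G r (par G r x))) ^^ j') (prod_encode (par G r x, prod_encode (dq x, acc)))
       = prod_encode (rt G r (par G r x), D)"
      using Suc.IH pp x j' by auto
    ultimately show "\<exists>D. (stepf (T (rt G r x)) ^^ j) (prod_encode (x, acc)) = prod_encode (rt G r x, D)"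
      using pp by simp
  qed
qed

definition La :: "nat \<Rightarrow> nat \<Rightarrow> nat \<Rightarrow> nat" where
  "La \<rho> x acc = snd (prod_decode ((stepf (T \<rho>) ^^ (n * n)) (prod_encode (x, acc))))"

lemma La_root: assumes x: "x \<in> {1..n}" "rt G r x = x" shows "La x x acc = acc"
proof -
  have "(stepf (T x) ^^ j) (prod_encode (x, acc)) = prod_encode (x, acc)" for j
    by (induction j) (simp_all add: stepf_root[OF x])
  then show ?thesis unfolding La_def by simp
qed

lemma La_step: assumes x: "x \<in> {1..n}" "rt G r x \<noteq> x"
  shows "La (rt G r x) x acc = La (rt G r x) (par G r x) (prod_encode (dq x, acc))"
proof -
  note pp = par_props[OF x]
  let ?f = "stepf (T (rt G r x))"
  let ?y = "prod_encode (par G r x, prod_encode (dq x, acc))"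
  have N: "dp G r x \<le> n * n" by (rule dp_le[OF x(1)])
  then obtain N' where N': "n * n = Suc N'" using dp_0 x by (cases "n * n") auto
  have "dp G r (par G r x) \<le> N'" using pp(4) N N' by simp
  then obtain D where D: "(?f ^^ N') ?y = prod_encode (rt G r x, D)"
    using stab pp by metis
  have rr: "rt G r (rt G r x) = rt G r x" using rt_rt[OF x(1)] .
  have rin: "rt G r x \<in> {1..n}" using rt_in[OF x(1)] by blast
  have "(?f ^^ (n*n)) (prod_encode (x, acc)) = (?f ^^ N') ?y"
    unfolding N' funpow_Suc_right o_def stepf_nonroot[OF x] ..
  moreover have "(?f ^^ (n*n)) ?y = (?f ^^ N') ?y"
    unfolding N' funpow.simps(2) o_def D using stepf_root[OF rin rr] by simp
  ultimately show ?thesis unfolding La_def by simp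
qed

lemma Lf_La: "Lf (T \<rho>) (n * n) v = La \<rho> v 0" unfolding Lf_def La_def ..

lemma up: "\<forall>x p. x \<in> {1..n} \<longrightarrow> dp G r x = k \<longrightarrow> p \<noteq> 0 \<longrightarrow>
   (\<exists>p'. p' \<noteq> 0 \<and> run G pn R (x, p, prod_encode (0, v)) k (rt G r x, p', prod_encode (0, v)))"
proof (induction k)
  case 0 then show ?case using dp_0 run_0 by fastforce
next
  case (Suc k)
  show ?case
  proof (intro allI impI)
    fix x p assume x: "x \<in> {1..n}" "dp G r x = Suc k" "p \<noteq> (0::nat)"
    then have nr: "rt G r x \<noteq> x" using dp_0 by fastforce
    note pp = par_props[OF x(1) nr] and uc = uc_props[OF x(1) nr]
    have Rx: "R x (p, prod_encode (0, v)) = (uc x, prod_encode (0, v))"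
      unfolding myR_def rfun_nonroot_def using nr x(3) by simp
    have 1: "run G pn R (x, p, prod_encode (0, v)) 1 (par G r x, uc x, prod_encode (0, v))"
      by (rule run_one) (use uc in \<open>auto simp: valid_def rstep_def Rx\<close>)
    have dk: "dp G r (par G r x) = k" using pp(4) x(2) by simp
    from Suc.IH[rule_format, OF pp(5) dk uc(3)] pp(3)
    obtain p' where "p' \<noteq> 0" "run G pn R (par G r x, uc x, prod_encode (0, v)) k (rt G r x, p', prod_encode (0, v))"
      by auto
    then show "\<exists>p'. p' \<noteq> 0 \<and> run G pn R (x, p, prod_encode (0, v)) (Suc k) (rt G r x, p', prod_encode (0, v))"
      using run_trans[OF 1] by fastforce
  qed
qed

lemma down: "\<forall>x acc p0 h0. x \<in> {1..n} \<longrightarrow> dp G r x = Suc k \<longrightarrow>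
   R (rt G r x) (p0, h0) = prod_decode (La (rt G r x) x acc) \<longrightarrow>
   (\<exists>p'. p' \<noteq> 0 \<and> run G pn R (rt G r x, p0, h0) (Suc k) (x, p', acc))"
proof (induction k)
  case 0
  show ?case
  proof (intro allI impI)
    fix x acc p0 h0 assume x: "x \<in> {1..n}" "dp G r x = Suc 0"
      and Rr: "R (rt G r x) (p0, h0) = prod_decode (La (rt G r x) x acc)"
    then have nr: "rt G r x \<noteq> x" using dp_0 by fastforce
    note pp = par_props[OF x(1) nr] and dq = dq_props[OF x(1) nr]
    have pr: "par G r x = rt G r x" using pp dp_0 x by (metis Suc_inject)
    have "La (rt G r x) x acc = prod_encode (dq x, acc)"
      using La_step[OF x(1) nr] La_root[of "par G r x"] pp pr by simp
    then have Rr': "R (rt G r x) (p0, h0) = (dq x, acc)" using Rr by simp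
    have "run G pn R (rt G r x, p0, h0) 1 (x, dq x, acc)"
      by (rule run_one) (use dq pr in \<open>simp_all add: valid_def rstep_def Rr'\<close>)
    then show "\<exists>p'. p' \<noteq> 0 \<and> run G pn R (rt G r x, p0, h0) (Suc 0) (x, p', acc)"
      using dq by auto
  qed
next
  case (Suc k)
  show ?case
  proof (intro allI impI)
    fix x acc p0 h0 assume x: "x \<in> {1..n}" "dp G r x = Suc (Suc k)"
      and Rr: "R (rt G r x) (p0, h0) = prod_decode (La (rt G r x) x acc)"
    then have nr: "rt G r x \<noteq> x" using dp_0 by fastforce
    note pp = par_props[OF x(1) nr] and dq = dq_props[OF x(1) nr]
    let ?w = "par G r x"
    have w: "?w \<in> {1..n}" "dp G r ?w = Suc k" using pp x by auto
    have nrw: "rt G r ?w \<noteq> ?w" using dp_0 w by fastforce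
    have "R (rt G r ?w) (p0, h0) = prod_decode (La (rt G r ?w) ?w (prod_encode (dq x, acc)))"
      using Rr La_step[OF x(1) nr] pp by simp
    then obtain p' where p': "p' \<noteq> 0" "run G pn R (rt G r x, p0, h0) (Suc k) (?w, p', prod_encode (dq x, acc))"
      using Suc.IH w pp by metis
    have Rw: "R ?w (p', prod_encode (dq x, acc)) = (dq x, acc)"
      unfolding myR_def rfun_nonroot_def using nrw p' dq by simp
    have "run G pn R (?w, p', prod_encode (dq x, acc)) 1 (x, dq x, acc)"
      by (rule run_one) (use dq in \<open>simp_all add: valid_def rstep_def Rw\<close>)
    then show "\<exists>p'. p' \<noteq> 0 \<and> run G pn R (rt G r x, p0, h0) (Suc (Suc k)) (x, p', acc)"
      using run_trans[OF p'(2)] dq by fastforce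
  qed
qed

lemma route: assumes u: "u \<in> {1..n}" and v: "v \<in> {1..n}" and ruv: "rt G r u = rt G r v"
  shows "\<exists>k. k \<le> dp G r u + dp G r v \<and> route_arrives G pn R u v k"
proof -
  let ?\<rho> = "rt G r u"
  have rin: "?\<rho> \<in> {1..n}" and rr: "rt G r ?\<rho> = ?\<rho>" using rt_in[OF u] rt_rt[OF u] by auto
  have A: "\<exists>p h. run G pn R (u, 0, v) (dp G r u) (?\<rho>, p, h) \<and> R ?\<rho> (p, h) = prod_decode (La ?\<rho> v 0)"
  proof (cases "rt G r u = u")
    case True
    have "R ?\<rho> (0, v) = prod_decode (La ?\<rho> v 0)"
      unfolding myR_def rfun_root_def using True Lf_La by simp
    then show ?thesis using True dp_0[OF u] run_0 by (metis)
  next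
    case nr: False
    note pp = par_props[OF u nr] and uc = uc_props[OF u nr]
    have Ru: "R u (0, v) = (uc u, prod_encode (0, v))"
      unfolding myR_def rfun_nonroot_def using nr by simp
    have 1: "run G pn R (u, 0, v) 1 (par G r u, uc u, prod_encode (0, v))"
      by (rule run_one) (use uc in \<open>auto simp: valid_def rstep_def Ru\<close>)
    obtain p' where p': "p' \<noteq> 0" "run G pn R (par G r u, uc u, prod_encode (0, v)) (dp G r (par G r u)) (?\<rho>, p', prod_encode (0, v))"
      using up pp uc by metis
    have "R ?\<rho> (p', prod_encode (0, v)) = prod_decode (La ?\<rho> v 0)"
      unfolding myR_def rfun_root_def using rr p'(1) Lf_La by simp
    moreover have "run G pn R (u, 0, v) (dp G r u) (?\<rho>, p', prod_encode (0, v))"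
      using run_trans[OF 1 p'(2)] pp by simp
    ultimately show ?thesis by blast
  qed
  then obtain p h where ph: "run G pn R (u, 0, v) (dp G r u) (?\<rho>, p, h)" "R ?\<rho> (p, h) = prod_decode (La ?\<rho> v 0)"
    by blast
  show ?thesis
  proof (cases "rt G r v = v")
    case True
    then have "route_arrives G pn R u v (dp G r u)" using run_arrives[OF ph(1)] ruv by simp
    then show ?thesis by (intro exI[of _ "dp G r u"]) simp
  next
    case False
    then obtain k where k: "dp G r v = Suc k" using dp_0[OF v] by (cases "dp G r v") auto
    obtain p' where "run G pn R (?\<rho>, p, h) (Suc k) (v, p', 0)"
      using down[of k] v k ph(2) ruv by metis
    then have "route_arrives G pn R u v (dp G r u + dp G r v)"
      using run_arrives[OF run_trans[OF ph(1)]] k by fastforce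
    then show ?thesis by (intro exI[of _ "dp G r u + dp G r v"]) simp
  qed
qed

end



lemma bits_len_le: "x < 2 ^ j \<Longrightarrow> length (bits x) \<le> j"
proof (induction j arbitrary: x)
  case 0 then show ?case by (simp add: bits.simps)
next
  case (Suc j)
  show ?case
  proof (cases "x = 0")
    case True then show ?thesis by (simp add: bits.simps)
  next
    case False
    have "x div 2 < 2 ^ j" using Suc.prems by auto
    then show ?thesis using Suc.IH False by (simp add: bits.simps[of x])
  qed
qed

lemma bits_n_lt: "n < 2 ^ length (bits n)"
proof (induction n rule: bits.induct)
  case (1 n)
  show ?case
  proof (cases "n = 0")
    case True then show ?thesis by (simp add: bits.simps)
  next
    case False
    then have "n div 2 < 2 ^ length (bits (n div 2))" using 1 by simp
    then show ?thesis using False by (simp add: bits.simps[of n])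
  qed
qed

lemma bits_n_ge: "n \<ge> 1 \<Longrightarrow> 2 ^ length (bits n) \<le> 2 * n"
proof (induction n rule: bits.induct)
  case (1 n)
  show ?case
  proof (cases "n div 2 = 0")
    case True
    then have "n = 1" using 1(2) by auto
    then show ?thesis by (simp add: bits.simps)
  next
    case False
    then have "2 ^ length (bits (n div 2)) \<le> 2 * (n div 2)" using 1 by simp
    then show ?thesis using 1(2) by (simp add: bits.simps[of n])
  qed
qed

lemma local_memory_le: "computes q Ru \<Longrightarrow> local_memory Ru \<le> enat (length (enc q))"
  unfolding local_memory_def by (rule INF_lower) simp

lemma sum_enat_fin: "finite A \<Longrightarrow> (\<Sum>x\<in>A. enat (f x)) = enat (\<Sum>x\<in>A. f x)"
  by (induction A rule: finite_induct) (simp_all add: zero_enat_def)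

lemma total_memory_le:
  assumes "\<And>x. x \<in> {1..n} \<Longrightarrow> computes (P x) (R x)"
  shows "\<exists>m. total_memory n R = enat m \<and> m \<le> (\<Sum>x\<in>{1..n}. length (enc (P x)))"
proof -
  have le: "local_memory (R x) \<le> enat (length (enc (P x)))" if "x \<in> {1..n}" for x
    using local_memory_le[OF assms[OF that]] .
  define m where "m x = the_enat (local_memory (R x))" for x
  have eq: "local_memory (R x) = enat (m x)" if "x \<in> {1..n}" for x
    using le[OF that] unfolding m_def by (cases "local_memory (R x)") auto
  have mle: "m x \<le> length (enc (P x))" if "x \<in> {1..n}" for x
    using le[OF that] eq[OF that] by simp
  have "(\<Sum>x\<in>{1..n}. local_memory (R x)) = (\<Sum>x\<in>{1..n}. enat (m x))"
    by (rule sum.cong) (simp_all add: eq)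
  then have "total_memory n R = enat (\<Sum>x\<in>{1..n}. m x)"
    unfolding total_memory_def using sum_enat_fin[of "{1..n}" m] by simp
  moreover have "(\<Sum>x\<in>{1..n}. m x) \<le> (\<Sum>x\<in>{1..n}. length (enc (P x)))"
    by (rule sum_mono) (rule mle)
  ultimately show ?thesis by blast
qed

lemma pe_le: "prod_encode (a,b) \<le> (a+b+1)*(a+b+1)"
proof -
  have "(a+b)*(a+b+1) div 2 \<le> (a+b)*(a+b+1)" by (rule div_le_dividend)
  then show ?thesis by (simp add: prod_encode_def triangle_def algebra_simps)
qed

context gr2 begin

definition "B = length (bits n)"

lemma lb_le_n: "y \<le> n \<Longrightarrow> length (bits y) \<le> B"
  unfolding B_def using bits_n_lt[of n] by (intro bits_len_le) simp

lemma lb_nn: "length (bits (n * n)) \<le> 2 * B"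
proof -
  have "n * n < 2 ^ B * 2 ^ B" using bits_n_lt[of n] unfolding B_def by (simp add: mult_strict_mono)
  then show ?thesis by (intro bits_len_le) (simp add: power_add[symmetric] mult_2)
qed

lemma lb_tab: assumes y: "y \<in> {1..n}" shows "length (bits (tabval pn G r y)) \<le> 2 * B + 2"
proof (cases "rt G r y = y")
  case True then show ?thesis by (simp add: tabval_def bits.simps)
next
  case False
  note pp = par_props[OF y False] and dq = dq_props[OF y False]
  have "deg G (par G r y) \<le> n"
  proof -
    have "nbrs G (par G r y) \<subseteq> {1..n}" unfolding nbrs_def using Gin by auto
    then show ?thesis unfolding deg_def using card_mono[of "{1..n}"] by fastforce
  qed
  then have d: "dq y \<le> n" using dq(1) by auto
  have p: "par G r y \<le> n" using pp(5) by auto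
  have "prod_encode (par G r y, dq y) \<le> (par G r y + dq y + 1) * (par G r y + dq y + 1)"
    by (rule pe_le)
  also have "\<dots> < 2 ^ (B + 1) * 2 ^ (B + 1)"
  proof -
    have nB: "n < 2 ^ B" using bits_n_lt[of n] unfolding B_def by simp
    have "par G r y + dq y + 1 < 2 ^ (B + 1)" using nB p d by simp
    then show ?thesis using mult_strict_mono[of "par G r y + dq y + 1" "2 ^ (B + 1)" "par G r y + dq y + 1" "2 ^ (B + 1)"]
      by (simp only:)
  qed
  also have "(2::nat) ^ (B + 1) * 2 ^ (B + 1) = 2 ^ (2 * B + 2)"
    by (simp only: power_add[symmetric]) (simp add: mult_2)
  finally show ?thesis unfolding tabval_def using False bits_len_le by simp
qed


lemma len_root: assumes x: "x \<in> {1..n}" "rt G r x = x"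
  shows "length (enc (myP n G r pn x)) \<le> 470 + 8 * B + 6 * (\<Sum>y\<in>compset n G r x. 287 + 8 * B)"
proof -
  have fin: "finite (compset n G r x)" unfolding compset_def by simp
  have "length (enc (TAB (entries n G r pn x))) =
     4 + (\<Sum>y\<leftarrow>sorted_list_of_set (compset n G r x). 283 + 4 * length (bits y) + 2 * length (bits (tabval pn G r y)))"
    unfolding len_TAB entries_def by (simp add: o_def)
  also have "\<dots> = 4 + (\<Sum>y\<in>compset n G r x. 283 + 4 * length (bits y) + 2 * length (bits (tabval pn G r y)))"
    using fin by (simp add: sum_list_distinct_conv_sum_set)
  also have "\<dots> \<le> 4 + (\<Sum>y\<in>compset n G r x. 287 + 8 * B)"
  proof -
    have "283 + 4 * length (bits y) + 2 * length (bits (tabval pn G r y)) \<le> 287 + 8 * B"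
      if "y \<in> compset n G r x" for y
    proof -
      have y: "y \<in> {1..n}" using that unfolding compset_def by auto
      show ?thesis using lb_le_n[of y] lb_tab[OF y] y by simp
    qed
    then have "(\<Sum>y\<in>compset n G r x. 283 + 4 * length (bits y) + 2 * length (bits (tabval pn G r y)))
       \<le> (\<Sum>y\<in>compset n G r x. 287 + 8 * B)" by (intro sum_mono) blast
    then show ?thesis by linarith
  qed
  finally have "length (enc (TAB (entries n G r pn x))) \<le> 4 + (\<Sum>y\<in>compset n G r x. 287 + 8 * B)" .
  then show ?thesis unfolding myP_def using x len_ROOTP lb_nn by simp
qed

lemma len_nonroot: assumes x: "x \<in> {1..n}" "rt G r x \<noteq> x"
  shows "length (enc (myP n G r pn x)) \<le> 118 + 4 * B"
proof -
  have "deg G x \<le> n"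
  proof -
    have "nbrs G x \<subseteq> {1..n}" unfolding nbrs_def using Gin by auto
    then show ?thesis unfolding deg_def using card_mono[of "{1..n}"] by fastforce
  qed
  then have "uc x \<le> n" using uc_props[OF x] by auto
  then show ?thesis unfolding myP_def using x len_NRP lb_le_n by simp
qed

lemma mem_bound: "(\<Sum>x\<in>{1..n}. length (enc (myP n G r pn x))) \<le> n * (2312 + 60 * B)"
proof -
  let ?g = "\<lambda>y::nat. 287 + 8 * B"
  have "(\<Sum>x\<in>{1..n}. length (enc (myP n G r pn x))) \<le>
        (\<Sum>x\<in>{1..n}. (590 + 12 * B) + 6 * (\<Sum>y\<in>compset n G r x. ?g y))"
  proof (rule sum_mono)
    fix x assume x: "x \<in> {1..n}"
    show "length (enc (myP n G r pn x)) \<le> (590 + 12 * B) + 6 * (\<Sum>y\<in>compset n G r x. ?g y)"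
      using len_root[OF x] len_nonroot[OF x] by (cases "rt G r x = x") force+
  qed
  also have "\<dots> = n * (590 + 12 * B) + 6 * (\<Sum>x\<in>{1..n}. \<Sum>y\<in>compset n G r x. ?g y)"
    by (simp add: sum.distrib sum_distrib_left)
  also have "(\<Sum>x\<in>{1..n}. \<Sum>y\<in>compset n G r x. ?g y) = (\<Sum>y\<in>{1..n}. \<Sum>x\<in>{x \<in> {1..n}. rt G r y = x}. ?g y)"
    unfolding compset_def by (rule sum.swap_restrict) auto
  also have "\<dots> = (\<Sum>y\<in>{1..n}. ?g y)"
  proof (rule sum.cong)
    fix y assume y: "y \<in> {1..n}"
    have "{x \<in> {1..n}. rt G r y = x} = {rt G r y}" using rt_in[OF y] by auto
    then show "(\<Sum>x\<in>{x \<in> {1..n}. rt G r y = x}. ?g y) = ?g y" by simp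
  qed simp
  also have "\<dots> = n * (287 + 8 * B)" by simp
  finally show ?thesis by (simp add: algebra_simps)
qed

end



lemma prob_inter3:
  fixes p :: "'a pmf"
  shows "measure_pmf.prob p (A \<inter> B \<inter> C) \<ge>
     measure_pmf.prob p A + measure_pmf.prob p B + measure_pmf.prob p C - 2"
proof -
  have "measure_pmf.prob p (-A \<union> -B \<union> -C) \<le> measure_pmf.prob p (-A \<union> -B) + measure_pmf.prob p (-C)"
    by (rule measure_Un_le) auto
  also have "measure_pmf.prob p (-A \<union> -B) \<le> measure_pmf.prob p (-A) + measure_pmf.prob p (-B)"
    by (rule measure_Un_le) auto
  finally have 1: "measure_pmf.prob p (-A \<union> -B \<union> -C) \<le> measure_pmf.prob p (-A) + measure_pmf.prob p (-B) + measure_pmf.prob p (-C)"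
    by simp
  have c: "measure_pmf.prob p (-X) = 1 - measure_pmf.prob p X" for X
    using measure_pmf.prob_compl[of X p] by (simp add: Compl_eq_Diff_UNIV)
  have "-A \<union> -B \<union> -C = - (A \<inter> B \<inter> C)" by auto
  then show ?thesis using 1 c[of A] c[of B] c[of C] c[of "A \<inter> B \<inter> C"] by simp
qed

lemma map_rps1: "map_pmf (\<lambda>(G, r, u, v). (G, r, u)) (root_pair_sample M n) = pair_sample M n"
  unfolding root_pair_sample_def pair_sample_def by (simp add: map_bind_pmf)
lemma map_rps2: "map_pmf (\<lambda>(G, r, u, v). (G, r, v)) (root_pair_sample M n) = pair_sample M n"
  unfolding root_pair_sample_def pair_sample_def by (simp add: map_bind_pmf)
lemma map_rps3: "map_pmf (\<lambda>(G, r, u, v). (G, u, v)) (root_pair_sample M n) = pair_sample M n"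
  unfolding root_pair_sample_def pair_sample_def by (simp add: map_bind_pmf)


lemma stretch_arith:
  fixes \<epsilon> a b c k fn :: real
  assumes e: "\<epsilon> > 0" and f: "fn > 0"
    and a: "\<bar>a / fn - 1\<bar> \<le> \<epsilon> / (4 + \<epsilon>)" and b: "\<bar>b / fn - 1\<bar> \<le> \<epsilon> / (4 + \<epsilon>)"
    and c: "\<bar>c / fn - 1\<bar> \<le> \<epsilon> / (4 + \<epsilon>)" and k: "k \<le> a + b"
  shows "k \<le> (2 + \<epsilon>) * c"
proof -
  define d where "d = \<epsilon> / (4 + \<epsilon>)"
  have a': "a \<le> (1 + d) * fn" using a f unfolding d_def[symmetric] by (auto simp: abs_le_iff field_simps)
  have b': "b \<le> (1 + d) * fn" using b f unfolding d_def[symmetric] by (auto simp: abs_le_iff field_simps)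
  have c': "(1 - d) * fn \<le> c" using c f unfolding d_def[symmetric] by (auto simp: abs_le_iff field_simps)
  have eq: "2 * (1 + d) = (2 + \<epsilon>) * (1 - d)" unfolding d_def using e by (simp add: field_simps)
  have "k \<le> 2 * ((1 + d) * fn)" using k a' b' by linarith
  also have "\<dots> = (2 + \<epsilon>) * ((1 - d) * fn)" using eq by (metis mult.assoc)
  also have "\<dots> \<le> (2 + \<epsilon>) * c" using c' e by (intro mult_left_mono) auto
  finally show ?thesis .
qed

lemma fpos:
  fixes d x fn :: real
  assumes "\<bar>x / fn - 1\<bar> \<le> d" "d < 1" "x \<ge> 0" shows "fn > 0"
proof (rule ccontr)
  assume "\<not> fn > 0"
  then have "x / fn \<le> 0" using assms(3) by (simp add: divide_nonneg_nonpos)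
  then show False using assms by auto
qed

lemma (in gr2) stretch_point:
  fixes \<epsilon> :: real and fn :: real
  assumes e: "\<epsilon> > 0" and u: "u \<in> {1..n}" and v: "v \<in> {1..n}"
    and g1: "gdist G r u \<noteq> \<infinity> \<and> \<bar>real (the_enat (gdist G r u)) / fn - 1\<bar> \<le> \<epsilon> / (4 + \<epsilon>)"
    and g2: "gdist G r v \<noteq> \<infinity> \<and> \<bar>real (the_enat (gdist G r v)) / fn - 1\<bar> \<le> \<epsilon> / (4 + \<epsilon>)"
    and g3: "gdist G u v \<noteq> \<infinity> \<and> \<bar>real (the_enat (gdist G u v)) / fn - 1\<bar> \<le> \<epsilon> / (4 + \<epsilon>)"
  shows "gdist G u v \<noteq> \<infinity> \<and>
     route_length_le G pn R u v ((2 + \<epsilon>) * real (the_enat (gdist G u v)))"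
proof -
  have ru: "(r,u) \<in> G\<^sup>*" and rv: "(r,v) \<in> G\<^sup>*" and uv: "(u,v) \<in> G\<^sup>*"
    using g1 g2 g3 gdist_eq by (metis enat.distinct(2))+
  have rtu: "rt G r u = r" and rtv: "rt G r v = r" using ru rv unfolding rt_def by auto
  have d1: "the_enat (gdist G r u) = dp G r u" using ru rtu gdist_eq unfolding dp_def by simp
  have d2: "the_enat (gdist G r v) = dp G r v" using rv rtv gdist_eq unfolding dp_def by simp
  have d3: "the_enat (gdist G u v) = gd G u v" using uv gdist_eq by simp
  have dl: "\<epsilon> / (4 + \<epsilon>) < 1" using e by simp
  have f: "fn > 0" using fpos[OF conjunct2[OF g3] dl] by simp
  show ?thesis
  proof (cases "u = v")
    case True
    have "route_arrives G pn R u v 0" unfolding route_arrives_def rstate_def using True by simp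
    moreover have "0 \<le> (2 + \<epsilon>) * real (the_enat (gdist G u v))" using e by simp
    ultimately show ?thesis using g3 unfolding route_length_le_def by (intro conjI exI[of _ 0]) auto
  next
    case False
    obtain k where k: "k \<le> dp G r u + dp G r v" "route_arrives G pn R u v k"
      using route[OF u v] rtu rtv by auto
    have "real k \<le> (2 + \<epsilon>) * real (the_enat (gdist G u v))"
      by (rule stretch_arith[OF e f, of "real (dp G r u)" "real (dp G r v)"])
         (use g1 g2 g3 d1 d2 k(1) in auto)
    then show ?thesis using g3 k(2) unfolding route_length_le_def by blast
  qed
qed


lemma ln2_ge: "ln (2::real) \<ge> 1/2"
  using ln_ge_iff[of 2 "1/2"] exp_half_le2 by simp

lemma mem_real:
  assumes n: "n \<ge> 8"
  shows "real (n * (2312 + 60 * length (bits n))) \<le> 2500 * real n * ln (real n)"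
proof -
  define B where "B = length (bits n)"
  have "2 ^ B \<le> 2 * n" using bits_n_ge[of n] n unfolding B_def by simp
  then have "real (2 ^ B) \<le> real (2 * n)" by (simp only: of_nat_le_iff)
  then have "ln (real (2 ^ B)) \<le> ln (real (2 * n))" using n by (intro ln_mono) auto
  then have "real B * ln 2 \<le> ln 2 + ln (real n)" using n by (simp add: ln_realpow ln_mult)
  then have "(real B - 1) * ln 2 \<le> ln (real n)" by (simp add: algebra_simps)
  moreover have "B \<ge> 1" using n unfolding B_def by (simp add: bits.simps)
  ultimately have "(real B - 1) * (1/2) \<le> ln (real n)"
    using ln2_ge by (smt (verit) mult_left_mono of_nat_1 of_nat_le_iff)
  then have B: "real B \<le> 1 + 2 * ln (real n)" by simp
  have "ln (8::real) \<le> ln (real n)" using n by (intro ln_mono) auto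
  moreover have "ln (8::real) = 3 * ln 2" using ln_realpow[of 2 3] by simp
  ultimately have l1: "ln (real n) \<ge> 1" using ln2_ge by simp
  have "real (2312 + 60 * B) \<le> 2500 * ln (real n)" using B l1 by simp
  then have "real n * real (2312 + 60 * B) \<le> real n * (2500 * ln (real n))"
    by (intro mult_left_mono) auto
  then show ?thesis unfolding B_def[symmetric] by (simp add: algebra_simps)
qed




theorem theorem4:
  fixes M :: "nat \<Rightarrow> graph pmf"
    and PN :: "graph \<Rightarrow> nat \<Rightarrow> nat \<Rightarrow> nat"
  assumes "random_network_model M"
    and "idemetric M"
    and "\<forall>n. \<forall>G\<in>set_pmf (M n). port_numbering n G (PN G)"
  shows "\<exists>Rt :: nat \<Rightarrow> graph \<Rightarrow> nat \<Rightarrow> routing.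
     (\<forall>n. \<forall>G\<in>set_pmf (M n). \<forall>r\<in>{1..n}. routing_function n G (PN G) (Rt n G r))
   \<and> (\<exists>C N. \<forall>n\<ge>N. \<forall>G\<in>set_pmf (M n). \<forall>r\<in>{1..n}.
        \<exists>m. total_memory n (Rt n G r) = enat m \<and> real m \<le> C * real n * ln (real n))
   \<and> (\<forall>\<epsilon>>0. (\<lambda>n. measure_pmf.prob (root_pair_sample M n)
        {(G, r, u, v). gdist G u v \<noteq> \<infinity> \<and>
           route_length_le G (PN G) (Rt n G r) u v ((2 + \<epsilon>) * real (the_enat (gdist G u v)))})
      \<longlonglongrightarrow> 1)"
proof -
  have loc: "gr2 n G r (PN G)" if "G \<in> set_pmf (M n)" "r \<in> {1..n}" for n G r
    using assms(1,3) that unfolding random_network_model_def gr2_def gr_def gr2_axioms_def by blast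
  obtain f :: "nat \<Rightarrow> real" where f: "\<forall>\<epsilon>>0.
     (\<lambda>n. measure_pmf.prob (pair_sample M n)
        {(G,u,v). gdist G u v \<noteq> \<infinity> \<and> \<bar>real (the_enat (gdist G u v)) / f n - 1\<bar> \<le> \<epsilon>})
     \<longlonglongrightarrow> 1"
    using assms(2) unfolding idemetric_def by blast
  define Rt where "Rt n G r = myR n G r (PN G)" for n G r
  have P1: "\<forall>n. \<forall>G\<in>set_pmf (M n). \<forall>r\<in>{1..n}. routing_function n G (PN G) (Rt n G r)"
  proof (intro allI ballI)
    fix n G r assume G: "G \<in> set_pmf (M n)" and r: "r \<in> {1..n}"
    interpret gr2 n G r "PN G" using loc[OF G r] .
    show "routing_function n G (PN G) (Rt n G r)"
      unfolding routing_function_def Rt_def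
    proof (intro ballI impI)
      fix u v assume u: "u \<in> {1..n}" and v: "v \<in> {1..n}" and uv: "u \<noteq> v \<and> gdist G u v \<noteq> \<infinity>"
      then have "(u,v) \<in> G\<^sup>*" using gdist_eq by (metis)
      then have "rt G r u = rt G r v" by (rule rt_eq)
      then show "\<exists>k. route_arrives G (PN G) (myR n G r (PN G)) u v k" using route[OF u v] by blast
    qed
  qed
  have P2: "\<forall>n\<ge>8. \<forall>G\<in>set_pmf (M n). \<forall>r\<in>{1..n}.
        \<exists>m. total_memory n (Rt n G r) = enat m \<and> real m \<le> 2500 * real n * ln (real n)"
  proof (intro allI impI ballI)
    fix n G r assume n: "n \<ge> (8::nat)" and G: "G \<in> set_pmf (M n)" and r: "r \<in> {1..n}"
    interpret gr2 n G r "PN G" using loc[OF G r] .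
    obtain m where m: "total_memory n (Rt n G r) = enat m"
      "m \<le> (\<Sum>x\<in>{1..n}. length (enc (myP n G r (PN G) x)))"
      using total_memory_le[of n "myP n G r (PN G)" "Rt n G r"] computes_myP unfolding Rt_def by blast
    have "m \<le> n * (2312 + 60 * length (bits n))" using m(2) mem_bound unfolding B_def by linarith
    then have "real m \<le> real (n * (2312 + 60 * length (bits n)))" by (simp only: of_nat_le_iff)
    also have "\<dots> \<le> 2500 * real n * ln (real n)" by (rule mem_real[OF n])
    finally show "\<exists>m. total_memory n (Rt n G r) = enat m \<and> real m \<le> 2500 * real n * ln (real n)"
      using m(1) by blast
  qed
  have P3: "(\<lambda>n. measure_pmf.prob (root_pair_sample M n)
        {(G, r, u, v). gdist G u v \<noteq> \<infinity> \<and>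
           route_length_le G (PN G) (Rt n G r) u v ((2 + \<epsilon>) * real (the_enat (gdist G u v)))})
      \<longlonglongrightarrow> 1" if e: "\<epsilon> > 0" for \<epsilon> :: real
  proof -
    define \<delta> where "\<delta> = \<epsilon> / (4 + \<epsilon>)"
    have dpos: "\<delta> > 0" unfolding \<delta>_def using e by simp
    define good where "good n = {(G,u,v). gdist G u v \<noteq> \<infinity> \<and> \<bar>real (the_enat (gdist G u v)) / f n - 1\<bar> \<le> \<delta>}" for n
    define Pn where "Pn n = measure_pmf.prob (pair_sample M n) (good n)" for n
    have Pn: "Pn \<longlonglongrightarrow> 1" using f dpos unfolding Pn_def good_def by blast
    define S where "S n = {(G, r, u, v). gdist G u v \<noteq> \<infinity> \<and>
           route_length_le G (PN G) (Rt n G r) u v ((2 + \<epsilon>) * real (the_enat (gdist G u v)))}" for n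
    let ?Q = "\<lambda>n. measure_pmf.prob (root_pair_sample M n) (S n)"
    have low: "?Q n \<ge> 3 * Pn n - 2" if n: "n \<ge> 1" for n
    proof -
      define AA where "AA = {(G :: graph, r :: nat, u :: nat, v :: nat). (G, r, u) \<in> good n}"
      define BB where "BB = {(G :: graph, r :: nat, u :: nat, v :: nat). (G, r, v) \<in> good n}"
      define CC where "CC = {(G :: graph, r :: nat, u :: nat, v :: nat). (G, u, v) \<in> good n}"
      have pA: "measure_pmf.prob (root_pair_sample M n) AA = Pn n"
      proof -
        have "AA = (\<lambda>(G, r, u, v). (G, r, u)) -` good n" unfolding AA_def by auto
        then show ?thesis unfolding Pn_def using map_rps1[of M n] measure_map_pmf
          by (metis (no_types, lifting))
      qed
      have pB: "measure_pmf.prob (root_pair_sample M n) BB = Pn n"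
      proof -
        have "BB = (\<lambda>(G, r, u, v). (G, r, v)) -` good n" unfolding BB_def by auto
        then show ?thesis unfolding Pn_def using map_rps2[of M n] measure_map_pmf
          by (metis (no_types, lifting))
      qed
      have pC: "measure_pmf.prob (root_pair_sample M n) CC = Pn n"
      proof -
        have "CC = (\<lambda>(G, r, u, v). (G, u, v)) -` good n" unfolding CC_def by auto
        then show ?thesis unfolding Pn_def using map_rps3[of M n] measure_map_pmf
          by (metis (no_types, lifting))
      qed
      have sub: "AA \<inter> BB \<inter> CC \<inter> set_pmf (root_pair_sample M n) \<subseteq> S n"
      proof
        fix x assume x: "x \<in> AA \<inter> BB \<inter> CC \<inter> set_pmf (root_pair_sample M n)"
        obtain G r u v where xe: "x = (G, r, u, v)" by (cases x) auto
        have ne: "{1..n} \<noteq> {}" using n by simp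
        have sp0: "set_pmf (pmf_of_set {Suc 0..n}) = {Suc 0..n}" using set_pmf_of_set[OF ne] by simp
        have sp: "G \<in> set_pmf (M n)" "r \<in> {1..n}" "u \<in> {1..n}" "v \<in> {1..n}"
          using x unfolding xe root_pair_sample_def by (auto simp: sp0)
        interpret gr2 n G r "PN G" using loc[OF sp(1,2)] .
        have "gdist G u v \<noteq> \<infinity> \<and> route_length_le G (PN G) (myR n G r (PN G)) u v ((2 + \<epsilon>) * real (the_enat (gdist G u v)))"
          by (rule stretch_point[OF e sp(3,4)]) (use x in \<open>auto simp: xe AA_def BB_def CC_def good_def \<delta>_def\<close>)
        then show "x \<in> S n" unfolding xe S_def Rt_def by simp
      qed
      have "3 * Pn n - 2 \<le> measure_pmf.prob (root_pair_sample M n) (AA \<inter> BB \<inter> CC)"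
        using prob_inter3[of "root_pair_sample M n" AA BB CC] pA pB pC by simp
      also have "\<dots> = measure_pmf.prob (root_pair_sample M n) (AA \<inter> BB \<inter> CC \<inter> set_pmf (root_pair_sample M n))"
        by (simp add: measure_Int_set_pmf)
      also have "\<dots> \<le> ?Q n" using sub by (intro measure_pmf.finite_measure_mono) auto
      finally show ?thesis .
    qed
    have "(\<lambda>n. 3 * Pn n - 2) \<longlonglongrightarrow> 3 * 1 - 2" by (intro tendsto_intros Pn)
    then have lim: "(\<lambda>n. 3 * Pn n - 2) \<longlonglongrightarrow> 1" by simp
    have "?Q \<longlonglongrightarrow> 1"
    proof (rule tendsto_sandwich[OF _ _ lim tendsto_const])
      show "\<forall>\<^sub>F n in sequentially. 3 * Pn n - 2 \<le> ?Q n"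
        using low by (intro eventually_sequentiallyI[of 1]) auto
      show "\<forall>\<^sub>F n in sequentially. ?Q n \<le> 1" by (simp add: measure_pmf.prob_le_1)
    qed
    then show ?thesis unfolding S_def .
  qed
  show ?thesis
    by (rule exI[of _ Rt]) (use P1 P2 P3 in blast)
qed



end
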